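(* Let $p>5$ be a prime, $q=p^h$, and let $\mathcal{F}$ be the projective closure of $ax^ny^m+bx^n+cy^m=1$ over $\mathbb{F}_q$, where $a,b,c\in\mathbb{F}_q^*$, $c\ne-\frac ab$, and $m,n$ are positive integers with $p\nmid mn$, $n\ge m$, $\min\{m,n\}>2$. If $p\mid(n+1)$ and $p\mid(m-1)$, then $\mathcal{F}$ is $\mathbb{F}_q$-Frobenius classical with respect to conics.
   Context: With $\varphi_0,\dots,\varphi_5$ the monomials of degree 2 in $x,y,1$, $\tau$ separating and $D^{(k)}_\tau$ Hasse derivatives, the $\mathbb{F}_q$-Frobenius order sequence w.r.t. conics is the lexicographically smallest $\nu_0<\dots<\nu_4$ such that the $6\times6$ determinant with first row $(\varphi_j^q)_j$ and rows $(D^{(\nu_i)}_\tau\varphi_j)_j$ is nonzero; the curve is $\mathbb{F}_q$-Frobenius classical w.r.t. conics if $\nu_i=i$ for all $i$. *)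

theory Defs
  imports "HOL-Computational_Algebra.Polynomial" "Jordan_Normal_Form.Determinant"
begin

definition Fq_set :: "nat \<Rightarrow> 'k::field set" where
  "Fq_set q = {c. c ^ q = c}"

definition is_hasse_deriv :: "'k::field set \<Rightarrow> 'k \<Rightarrow> (nat \<Rightarrow> 'k \<Rightarrow> 'k) \<Rightarrow> bool" where
  "is_hasse_deriv F tau D \<longleftrightarrow>
     (\<forall>f. D 0 f = f) \<and>
     (\<forall>k f g. D k (f + g) = D k f + D k g) \<and>
     (\<forall>k f g. D k (f * g) = (\<Sum>i\<le>k. D i f * D (k - i) g)) \<and>
     (\<forall>k c. 1 \<le> k \<longrightarrow> c \<in> F \<longrightarrow> D k c = 0) \<and>
     D 1 tau = 1 \<and> (\<forall>k. 2 \<le> k \<longrightarrow> D k tau = 0)"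

definition conic_monomials :: "'k::field \<Rightarrow> 'k \<Rightarrow> nat \<Rightarrow> 'k" where
  "conic_monomials x y j = [1, x, y, x^2, x*y, y^2] ! j"

definition frob_det :: "nat \<Rightarrow> (nat \<Rightarrow> 'k::field \<Rightarrow> 'k) \<Rightarrow> (nat \<Rightarrow> 'k) \<Rightarrow> nat list \<Rightarrow> 'k" where
  "frob_det q D phi nu = det (mat 6 6 (\<lambda>(i, j).
      if i = 0 then phi j ^ q else D (nu ! (i - 1)) (phi j)))"

definition lex_less :: "nat list \<Rightarrow> nat list \<Rightarrow> bool" where
  "lex_less u v \<longleftrightarrow> (\<exists>k < length v. k < length u \<and> (\<forall>i<k. u ! i = v ! i) \<and> u ! k < v ! k)"

definition admissible_seq :: "nat list \<Rightarrow> bool" where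
  "admissible_seq nu \<longleftrightarrow> length nu = 5 \<and> sorted_wrt (<) nu"

definition is_frob_order_seq :: "nat \<Rightarrow> (nat \<Rightarrow> 'k::field \<Rightarrow> 'k) \<Rightarrow> (nat \<Rightarrow> 'k) \<Rightarrow> nat list \<Rightarrow> bool" where
  "is_frob_order_seq q D phi nu \<longleftrightarrow>
     admissible_seq nu \<and> frob_det q D phi nu \<noteq> 0 \<and>
     (\<forall>nu'. admissible_seq nu' \<and> lex_less nu' nu \<longrightarrow> frob_det q D phi nu' = 0)"

definition frobenius_classical_conics :: "nat \<Rightarrow> (nat \<Rightarrow> 'k::field \<Rightarrow> 'k) \<Rightarrow> 'k \<Rightarrow> 'k \<Rightarrow> bool" where
  "frobenius_classical_conics q D x y \<longleftrightarrow>
     is_frob_order_seq q D (conic_monomials x y) [0, 1, 2, 3, 4]"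

definition transcendental_over :: "'k::field set \<Rightarrow> 'k \<Rightarrow> bool" where
  "transcendental_over F x \<longleftrightarrow>
     (\<forall>P :: 'k poly. P \<noteq> 0 \<longrightarrow> (\<forall>i. coeff P i \<in> F) \<longrightarrow> poly P x \<noteq> 0)"

text \<open>Every element of the field is a rational function in x, y with coefficients in F,
  i.e. the field equals F(x, y).\<close>
definition generated_by :: "'k::field set \<Rightarrow> 'k \<Rightarrow> 'k \<Rightarrow> bool" where
  "generated_by F x y \<longleftrightarrow>
     (\<forall>z. \<exists>N (P :: nat \<Rightarrow> 'k poly) (Q :: nat \<Rightarrow> 'k poly).
        (\<forall>i j. coeff (P i) j \<in> F \<and> coeff (Q i) j \<in> F) \<and>
        (\<Sum>i\<le>N. poly (Q i) x * y ^ i) \<noteq> 0 \<and>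
        z = (\<Sum>i\<le>N. poly (P i) x * y ^ i) / (\<Sum>i\<le>N. poly (Q i) x * y ^ i))"

end

theory Submission
  imports Defs "HOL-Computational_Algebra.Formal_Power_Series" "HOL-Computational_Algebra.Primes"
begin


locale hasse =
  fixes F :: "'k::field set" and tau :: 'k and D :: "nat \<Rightarrow> 'k \<Rightarrow> 'k"
  assumes hd: "is_hasse_deriv F tau D"
  and F1: "1 \<in> F"
begin

lemma D0[simp]: "D 0 f = f" using hd unfolding is_hasse_deriv_def by blast
lemma Dadd: "D k (f + g) = D k f + D k g" using hd unfolding is_hasse_deriv_def by blast
lemma Dmult: "D k (f * g) = (\<Sum>i\<le>k. D i f * D (k - i) g)" using hd unfolding is_hasse_deriv_def by blast
lemma Dconst: "1 \<le> k \<Longrightarrow> c \<in> F \<Longrightarrow> D k c = 0" using hd unfolding is_hasse_deriv_def by blast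
lemma Dtau: "D 1 tau = 1" using hd unfolding is_hasse_deriv_def by blast

lemma Dzero[simp]: "D k 0 = 0"
  using Dadd[of k 0 0] by (metis add.right_neutral add_left_cancel)
lemma Duminus: "D k (- f) = - D k f"
  using Dadd[of k f "-f"] by (simp add: add_eq_0_iff)
lemma Ddiff: "D k (f - g) = D k f - D k g"
  using Dadd[of k f "-g"] Duminus[of k g] by simp
lemma Dsum: "D k (\<Sum>i\<in>A. f i) = (\<Sum>i\<in>A. D k (f i))"
  by (induction A rule: infinite_finite_induct) (auto simp: Dadd)
lemma D1mult: "D 1 (f * g) = f * D 1 g + D 1 f * g"
  by (simp add: Dmult)
lemma D1mult'[simp]: "D (Suc 0) (f * g) = f * D (Suc 0) g + D (Suc 0) f * g"
  by (simp add: Dmult)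

definition flat :: "'k \<Rightarrow> bool" where
  "flat f \<longleftrightarrow> (\<forall>k. 1 \<le> k \<longrightarrow> k \<le> 4 \<longrightarrow> D k f = 0)"

lemma flat_D: "flat c \<Longrightarrow> 1 \<le> k \<Longrightarrow> k \<le> 4 \<Longrightarrow> D k c = 0"
  unfolding flat_def by blast

lemma flat_multD: assumes "flat c" "k \<le> 4" shows "D k (c * f) = c * D k f"
proof -
  have "{..k} = insert 0 {1..k}" by auto
  hence "D k (c * f) = D 0 c * D k f + (\<Sum>i\<in>{1..k}. D i c * D (k - i) f)"
    by (simp add: Dmult)
  also have "(\<Sum>i\<in>{1..k}. D i c * D (k - i) f) = 0"
    using assms by (intro sum.neutral) (auto simp: flat_D)
  finally show ?thesis by simp
qed

lemma flat_multD': assumes "flat c" "k \<le> 4" shows "D k (f * c) = c * D k f"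
  using flat_multD[OF assms, of f] by (simp add: mult.commute)

lemma flat_mult[intro]: "flat c \<Longrightarrow> flat d \<Longrightarrow> flat (c * d)"
  unfolding flat_def by (simp add: flat_multD[unfolded flat_def])
lemma flat_add[intro]: "flat c \<Longrightarrow> flat d \<Longrightarrow> flat (c + d)"
  unfolding flat_def by (simp add: Dadd)
lemma flat_uminus[intro]: "flat c \<Longrightarrow> flat (- c)"
  unfolding flat_def by (simp add: Duminus)
lemma flat_diff[intro]: "flat c \<Longrightarrow> flat d \<Longrightarrow> flat (c - d)"
  unfolding flat_def by (simp add: Ddiff)
lemma flat_const[intro]: "c \<in> F \<Longrightarrow> flat c"
  unfolding flat_def by (simp add: Dconst)
lemma flat_one[intro]: "flat 1" using F1 by blast
lemma flat_zero[intro]: "flat 0" unfolding flat_def by simp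
lemma flat_power[intro]: "flat c \<Longrightarrow> flat (c ^ n)"
  by (induction n) auto
lemma flat_numeral[intro]: "flat (numeral w)"
  by (induction w) (simp_all only: numeral.simps flat_add flat_one)

definition T :: "'k \<Rightarrow> 'k fps" where "T f = Abs_fps (\<lambda>k. D k f)"

lemma T_nth[simp]: "fps_nth (T f) k = D k f" unfolding T_def by simp

lemma T_mult: "T (f * g) = T f * T g"
  by (rule fps_ext) (simp add: fps_mult_nth Dmult atMost_atLeast0)

lemma T_one: "T 1 = 1"
proof (rule fps_ext)
  fix k show "fps_nth (T 1) k = fps_nth 1 k" using F1 by (cases k) (auto simp: Dconst)
qed

lemma T_power: "T (f ^ n) = T f ^ n"
  by (induction n) (simp_all add: T_one T_mult)

definition Dl :: "'k \<Rightarrow> 'k fps" where "Dl z = T z - fps_const z"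

lemma Dl_0: "fps_nth (Dl z) 0 = 0" unfolding Dl_def by simp
lemma Dl_nth: "k \<ge> 1 \<Longrightarrow> fps_nth (Dl z) k = D k z" unfolding Dl_def by simp

lemma Dl_power_nth:
  "fps_nth (Dl z ^ l) k = (if k < l then 0 else if k = l then D 1 z ^ l else fps_nth (Dl z ^ l) k)"
proof -
  define G where "G = Abs_fps (\<lambda>k. fps_nth (Dl z) (k+1))"
  have e: "Dl z = fps_X * G"
    by (rule fps_ext) (auto simp: G_def Dl_0 fps_X_mult_nth)
  have "Dl z ^ l = fps_X ^ l * G ^ l" by (simp add: e power_mult_distrib)
  hence "fps_nth (Dl z ^ l) k = (if k < l then 0 else fps_nth (G ^ l) (k - l))"
    by (simp add: fps_X_power_mult_nth)
  moreover have "fps_nth (G ^ l) 0 = D 1 z ^ l"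
    by (simp add: fps_nth_power_0 G_def Dl_nth)
  ultimately show ?thesis by auto
qed

lemma D_power_expand:
  "D k (z ^ i) = (\<Sum>l\<le>i. of_nat (i choose l) * z ^ (i - l) * fps_nth (Dl z ^ l) k)"
proof -
  have "T z = Dl z + fps_const z" unfolding Dl_def by simp
  hence "T (z ^ i) = (Dl z + fps_const z) ^ i" by (simp add: T_power)
  also have "\<dots> = (\<Sum>l\<le>i. of_nat (i choose l) * Dl z ^ l * fps_const z ^ (i - l))"
    by (rule binomial_ring)
  finally have "fps_nth (T (z ^ i)) k = (\<Sum>l\<le>i. fps_nth (of_nat (i choose l) * Dl z ^ l * fps_const z ^ (i - l)) k)"
    by (simp add: fps_sum_nth)
  also have "\<dots> = (\<Sum>l\<le>i. of_nat (i choose l) * z ^ (i - l) * fps_nth (Dl z ^ l) k)"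
    by (intro sum.cong refl) (simp add: fps_of_nat[symmetric] mult.commute mult.left_commute)
  finally show ?thesis by simp
qed

lemma flat_ppower:
  assumes p: "prime p" "of_nat p = (0::'k)" "p > 4"
  shows "flat (z ^ p)"
  unfolding flat_def
proof (intro allI impI)
  fix k :: nat assume k: "1 \<le> k" "k \<le> 4"
  have "D k (z ^ p) = (\<Sum>l\<le>p. of_nat (p choose l) * z ^ (p - l) * fps_nth (Dl z ^ l) k)"
    by (rule D_power_expand)
  also have "\<dots> = 0"
  proof (intro sum.neutral ballI)
    fix l assume l: "l \<in> {..p}"
    consider "l = 0" | "0 < l \<and> l < p" | "l = p" using l by fastforce
    then show "of_nat (p choose l) * z ^ (p - l) * fps_nth (Dl z ^ l) k = 0"
    proof cases
      case 1 then show ?thesis using k by simp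
    next
      case 2
      then have "p dvd (p choose l)" using p by (intro dvd_choose_prime) auto
      then obtain t where "p choose l = p * t" by blast
      then have "(of_nat (p choose l) :: 'k) = 0" using p by simp
      then show ?thesis by simp
    next
      case 3 then show ?thesis using k p Dl_power_nth[of z l k] by simp
    qed
  qed
  finally show "D k (z ^ p) = 0" .
qed

lemma D1_poly:
  assumes "D 1 x = 0" and "\<forall>i. coeff P i \<in> F"
  shows "D 1 (poly P x) = 0"
  using assms(2)
proof (induction P rule: pCons_induct)
  case 0 then show ?case by simp
next
  case (pCons a P)
  have a: "a \<in> F" using pCons.prems[rule_format, of 0] by simp
  have "\<forall>i. coeff P i \<in> F" using pCons.prems by (metis coeff_pCons_Suc)
  then have "D 1 (poly P x) = 0" by (rule pCons.IH)
  then show ?case using a assms(1) by (simp add: Dadd D1mult Dconst)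
qed

lemma D1_power: "D 1 y = 0 \<Longrightarrow> D 1 (y ^ i) = 0"
  by (induction i) (auto simp: D1mult T_one[symmetric] Dconst F1)

lemma D1_div: assumes "B \<noteq> 0" "D 1 A = 0" "D 1 B = 0" shows "D 1 (A / B) = 0"
proof -
  have "A = (A / B) * B" using assms by simp
  then have "D 1 A = (A / B) * D 1 B + D 1 (A / B) * B" by (metis D1mult)
  then show ?thesis using assms by simp
qed

end

lemma of_nat_choose_prime_0:
  assumes "prime p" "of_nat p = (0::'a::comm_ring_1)" "0 < l" "l < p"
  shows "(of_nat (p choose l) :: 'a) = 0"
proof -
  have "p dvd (p choose l)" using assms by (intro dvd_choose_prime) auto
  then obtain t where "p choose l = p * t" by blast
  then show ?thesis using assms by simp
qed

lemma frob_add: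
  assumes "prime p" "of_nat p = (0::'a::comm_ring_1)"
  shows "(u + v :: 'a) ^ p = u ^ p + v ^ p"
proof -
  have p0: "p > 0" using assms prime_gt_0_nat by blast
  have "(u + v) ^ p = (\<Sum>k\<le>p. of_nat (p choose k) * u ^ k * v ^ (p - k))"
    by (rule binomial_ring)
  also have "{..p} = insert 0 (insert p {1..<p})" using p0 by auto
  also have "(\<Sum>k\<in>insert 0 (insert p {1..<p}). of_nat (p choose k) * u ^ k * v ^ (p - k))
     = v ^ p + u ^ p + (\<Sum>k\<in>{1..<p}. of_nat (p choose k) * u ^ k * v ^ (p - k))"
    using p0 by (simp add: sum.insert)
  also have "(\<Sum>k\<in>{1..<p}. of_nat (p choose k) * u ^ k * v ^ (p - k)) = 0"
    using assms by (intro sum.neutral) (auto simp: of_nat_choose_prime_0)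
  finally show ?thesis by (simp add: add.commute)
qed

lemma frob_add_pow:
  assumes "prime p" "of_nat p = (0::'a::comm_ring_1)"
  shows "(u + v :: 'a) ^ (p ^ h) = u ^ (p ^ h) + v ^ (p ^ h)"
proof (induction h)
  case 0 then show ?case by simp
next
  case (Suc h)
  have "(u + v) ^ (p ^ Suc h) = ((u + v) ^ (p ^ h)) ^ p" by (simp add: power_mult[symmetric] mult.commute)
  also have "\<dots> = (u ^ (p ^ h)) ^ p + (v ^ (p ^ h)) ^ p" using Suc frob_add[OF assms] by simp
  finally show ?case by (simp add: power_mult[symmetric] mult.commute)
qed

locale subr =
  fixes S :: "'a::comm_ring_1 set"
  assumes S0: "0 \<in> S" and S1: "1 \<in> S" and Sadd: "a \<in> S \<Longrightarrow> b \<in> S \<Longrightarrow> a + b \<in> S"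
    and Smult: "a \<in> S \<Longrightarrow> b \<in> S \<Longrightarrow> a * b \<in> S" and Sneg: "a \<in> S \<Longrightarrow> - a \<in> S"
begin

lemma Ssum: "(\<And>i. i \<in> A \<Longrightarrow> f i \<in> S) \<Longrightarrow> (\<Sum>i\<in>A. f i) \<in> S"
  by (induction A rule: infinite_finite_induct) (auto intro: S0 Sadd)

definition cp :: "'a poly \<Rightarrow> bool" where "cp P \<longleftrightarrow> (\<forall>i. coeff P i \<in> S)"

lemma cp_add[intro]: "cp P \<Longrightarrow> cp Q \<Longrightarrow> cp (P + Q)"
  unfolding cp_def by (auto intro: Sadd)
lemma cp_neg[intro]: "cp P \<Longrightarrow> cp (- P)"
  unfolding cp_def by (auto intro: Sneg)
lemma cp_diff[intro]: "cp P \<Longrightarrow> cp Q \<Longrightarrow> cp (P - Q)"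
  using cp_add[of P "-Q"] cp_neg[of Q] by simp
lemma cp_mult[intro]: "cp P \<Longrightarrow> cp Q \<Longrightarrow> cp (P * Q)"
  unfolding cp_def coeff_mult by (auto intro!: Ssum Smult)
lemma cp_one[intro]: "cp 1"
  unfolding cp_def by (auto simp: coeff_1 intro: S0 S1)
lemma cp_power[intro]: "cp P \<Longrightarrow> cp (P ^ n)"
  by (induction n) auto
lemma cp_monom[intro]: "c \<in> S \<Longrightarrow> cp (monom c n)"
  unfolding cp_def by (auto simp: coeff_monom intro: S0)
lemma cp_const[intro]: "c \<in> S \<Longrightarrow> cp [:c:]"
  unfolding cp_def by (auto simp: coeff_pCons split: nat.split intro: S0)

end



lemma bezout_dvd1:
  fixes N Dn u v X :: "'a::comm_ring_1"
  assumes uv: "u * N + v * Dn = 1"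
  shows "N ^ k dvd X * Dn \<Longrightarrow> N ^ k dvd X"
proof (induction k)
  case 0 then show ?case by simp
next
  case (Suc k)
  have "N ^ k dvd X * Dn" using Suc.prems by (metis dvd_trans dvd_triv_right power_Suc)
  then have "N ^ k dvd X" by (rule Suc.IH)
  then have "N ^ Suc k dvd u * X * N" by (metis dvd_mult mult.commute mult_dvd_mono power_Suc dvd_refl)
  moreover have "N ^ Suc k dvd v * (X * Dn)" using Suc.prems by simp
  ultimately have "N ^ Suc k dvd u * X * N + v * (X * Dn)" by simp
  also have "u * X * N + v * (X * Dn) = X * (u * N + v * Dn)" by (simp add: algebra_simps)
  finally show ?case using uv by simp
qed

lemma bezout_dvd:
  fixes N Dn u v X :: "'a::comm_ring_1"
  assumes uv: "u * N + v * Dn = 1"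
  shows "N ^ k dvd X * Dn ^ j \<Longrightarrow> N ^ k dvd X"
proof (induction j arbitrary: X)
  case 0 then show ?case by simp
next
  case (Suc j)
  have e: "(X * Dn ^ j) * Dn = X * Dn ^ Suc j" by (simp add: algebra_simps)
  have "N ^ k dvd (X * Dn ^ j) * Dn" unfolding e by (rule Suc.prems)
  then have "N ^ k dvd X * Dn ^ j" by (rule bezout_dvd1[OF uv])
  then show ?case by (rule Suc.IH)
qed

lemma poly_contra:
  fixes a b c :: "'a::field"
  assumes b: "b \<noteq> 0" and abc: "a + b * c \<noteq> 0" and nm: "m \<le> n" and m: "0 < m" and Q: "0 < Q"
  and eq: "([:1:] - monom b n) ^ (Q + m) * (monom c Q + monom a n) ^ m
         = (monom 1 Q - monom b n) ^ m * (monom a n + [:c:]) ^ (Q + m)"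
  shows False
proof -
  define Np where "Np = [:1:] - monom b n"
  define Dn where "Dn = monom a n + [:c:]"
  define Psi where "Psi = monom 1 Q - monom b n"
  define Phi where "Phi = monom c Q + monom a n"
  have n: "0 < n" using nm m by simp
  have eq': "Np ^ (Q + m) * Phi ^ m = Psi ^ m * Dn ^ (Q + m)"
    using eq unfolding Np_def Dn_def Psi_def Phi_def .
  have "smult a Np + smult b Dn = [:a + b * c:]"
      unfolding Np_def Dn_def by (rule poly_eqI) (simp add: coeff_monom coeff_pCons algebra_simps split: nat.split)
  then have "smult (1 / (a + b * c)) (smult a Np + smult b Dn) = 1"
    using abc by (simp add: one_pCons)
  then have "[:a / (a + b * c):] * Np + [:b / (a + b * c):] * Dn = 1"
    by (simp add: smult_add_right)
  note cop = bezout_dvd[OF this]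
  have Np0: "coeff Np 0 = 1" using n unfolding Np_def by (simp add: coeff_monom)
  have Npn: "coeff Np n = - b" using n unfolding Np_def by (simp add: coeff_monom coeff_pCons split: nat.split)
  have Np_nz: "Np \<noteq> 0" using Np0 by auto
  have degNp: "degree Np = n"
  proof (rule antisym)
    show "degree Np \<le> n" unfolding Np_def
      by (rule degree_diff_le) (auto simp: degree_monom_le)
    show "n \<le> degree Np" using Npn b by (intro le_degree) simp
  qed
  have "Np ^ (Q + m) dvd Psi ^ m * Dn ^ (Q + m)" using eq' by (metis dvd_triv_left)
  then have dv: "Np ^ (Q + m) dvd Psi ^ m" by (rule cop)
  show False
  proof (cases "Psi = 0")
    case False
    then have "Psi ^ m \<noteq> 0" by simp
    from dvd_imp_degree_le[OF dv this]
    have "(Q + m) * n \<le> degree (Psi ^ m)" using degree_power_eq[OF Np_nz] degNp by simp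
    also have "\<dots> \<le> degree Psi * m" by (rule degree_power_le)
    also have "degree Psi \<le> max Q n" unfolding Psi_def
      by (rule degree_diff_le) (auto simp: degree_monom_le le_max_iff_disj)
    then have "degree Psi * m \<le> max Q n * m" by simp
    finally have ineq: "(Q + m) * n \<le> max Q n * m" .
    show False
    proof (cases "Q \<le> n")
      case True
      then have "max Q n * m = n * m" by simp
      moreover have "n * m < (Q + m) * n"
      proof -
        have "0 < Q * n" using Q n by simp
        moreover have "(Q + m) * n = Q * n + m * n" by (simp add: add_mult_distrib)
        ultimately show ?thesis by simp
      qed
      ultimately show False using ineq by linarith
    next
      case False
      then have "max Q n * m = Q * m" by simp
      moreover have "Q * m \<le> Q * n" using nm by simp
      moreover have "Q * n < (Q + m) * n"
      proof -
        have "0 < m * n" using m n by simp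
        moreover have "(Q + m) * n = Q * n + m * n" by (simp add: add_mult_distrib)
        ultimately show ?thesis by simp
      qed
      ultimately show False using ineq by linarith
    qed
  next
    case True
    have "coeff Psi Q = 0" using True by simp
    then have nQ: "n = Q" and b1: "b = 1" unfolding Psi_def by (auto simp: coeff_monom split: if_splits)
    have "Np ^ (Q + m) * Phi ^ m = 0" using eq' True m by simp
    then have "Phi = 0" using Np_nz by simp
    then have "coeff Phi n = 0" by simp
    then have "c + a = 0" unfolding Phi_def using nQ by (simp add: coeff_monom)
    then show False using abc b1 by (simp add: add.commute)
  qed
qed



lemma det_expand0:
  "det (mat (Suc n) (Suc n) f) =
   (\<Sum>j<Suc n. (-1)^j * f (0,j) * det (mat n n (\<lambda>(i,k). f (Suc i, if k < j then k else Suc k))))"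
proof -
  have "det (mat (Suc n) (Suc n) f) = (\<Sum>j<Suc n. mat (Suc n) (Suc n) f $$ (0,j) * cofactor (mat (Suc n) (Suc n) f) 0 j)"
    by (rule laplace_expansion_row) auto
  also have "\<dots> = (\<Sum>j<Suc n. (-1)^j * f (0,j) * det (mat n n (\<lambda>(i,k). f (Suc i, if k < j then k else Suc k))))"
  proof (intro sum.cong refl)
    fix j assume j: "j \<in> {..<Suc n}"
    have "mat_delete (mat (Suc n) (Suc n) f) 0 j = mat n n (\<lambda>(i,k). f (Suc i, if k < j then k else Suc k))"
      unfolding mat_delete_def by (rule eq_matI) auto
    then show "mat (Suc n) (Suc n) f $$ (0,j) * cofactor (mat (Suc n) (Suc n) f) 0 j =
       (-1)^j * f (0,j) * det (mat n n (\<lambda>(i,k). f (Suc i, if k < j then k else Suc k)))"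
      using j unfolding cofactor_def by simp
  qed
  finally show ?thesis .
qed


definition dl :: "'a::comm_ring_1 list list \<Rightarrow> 'a" where
  "dl xs = det (mat (length xs) (length xs) (\<lambda>(i,j). xs ! i ! j))"

definition delc :: "nat \<Rightarrow> 'a list \<Rightarrow> 'a list" where
  "delc j rw = take j rw @ drop (Suc j) rw"

lemma dl_nil[simp]: "dl [] = 1" unfolding dl_def by simp

lemma dl_cons:
  assumes "length r = Suc (length rs)" "list_all (\<lambda>rw. length rw = length r) rs"
  shows "dl (r # rs) = sum_list (map (\<lambda>j. (-1)^j * r ! j * dl (map (delc j) rs)) [0..<length r])"
proof -
  let ?n = "length rs"
  have "dl (r # rs) = det (mat (Suc ?n) (Suc ?n) (\<lambda>(i,j). (r # rs) ! i ! j))"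
    unfolding dl_def by simp
  also have "\<dots> = (\<Sum>j<Suc ?n. (-1)^j * r ! j * det (mat ?n ?n (\<lambda>(i,k). rs ! i ! (if k < j then k else Suc k))))"
    by (simp add: det_expand0)
  also have "\<dots> = (\<Sum>j<Suc ?n. (-1)^j * r ! j * dl (map (delc j) rs))"
  proof (intro sum.cong refl)
    fix j assume j: "j \<in> {..<Suc ?n}"
    have "mat ?n ?n (\<lambda>(i,k). rs ! i ! (if k < j then k else Suc k)) = mat ?n ?n (\<lambda>(i,k). map (delc j) rs ! i ! k)"
    proof (rule eq_matI)
      fix i k assume ik: "i < dim_row (mat ?n ?n (\<lambda>(i,k). map (delc j) rs ! i ! k))" "k < dim_col (mat ?n ?n (\<lambda>(i,k). map (delc j) rs ! i ! k))"
      then have i: "i < ?n" and k: "k < ?n" by auto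
      have len: "length (rs ! i) = Suc ?n" using assms i by (simp add: list_all_length)
      show "mat ?n ?n (\<lambda>(i,k). rs ! i ! (if k < j then k else Suc k)) $$ (i, k) = mat ?n ?n (\<lambda>(i,k). map (delc j) rs ! i ! k) $$ (i, k)"
        using i k j len by (auto simp: delc_def nth_append min_def)
    qed auto
    then show "(-1)^j * r ! j * det (mat ?n ?n (\<lambda>(i,k). rs ! i ! (if k < j then k else Suc k))) = (-1)^j * r ! j * dl (map (delc j) rs)"
      unfolding dl_def by simp
  qed
  also have "\<dots> = sum_list (map (\<lambda>j. (-1)^j * r ! j * dl (map (delc j) rs)) [0..<length r])"
    using assms(1) by (simp add: interv_sum_list_conv_sum_set_nat atLeast0LessThan)
  finally show ?thesis .
qed

lemma detN:
  fixes a b c C E X Y :: "'a::comm_ring_1"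
  shows "dl [[1, X, Y, X^2, X*Y, Y^2],
     [1, b*C, 0, b^2*C^2, 0, 0],
     [-2*c*E, (a-b*c)*C*E, 1, 2*a*b*C^2*E, b*C, 0],
     [c^2*E^2, -a*c*C*E^2, -2*c*E, a^2*C^2*E^2, (a-b*c)*C*E, 1],
     [0, 0, c^2*E^2, 0, -a*c*C*E^2, -2*c*E],
     [0,0,0,0,0,c^2*E^2]]
   = - (b*C - X + a*C*E*Y + c*E*X*Y) * c^3 * (a + b*c)^3 * C^3 * E^6"
  apply (simp add: dl_cons delc_def upt_rec)
  apply (simp add: eval_nat_numeral algebra_simps)
  done


lemma sum6: fixes f :: "nat \<Rightarrow> 'a::comm_monoid_add" shows "(\<Sum>k<6. f k) = f 0 + f 1 + f 2 + f 3 + f 4 + f 5"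
  by (simp add: numeral_eq_Suc lessThan_Suc add_ac)
lemma sum5: fixes f :: "nat \<Rightarrow> 'a::comm_monoid_add" shows "(\<Sum>k<5. f k) = f 0 + f 1 + f 2 + f 3 + f 4"
  by (simp add: numeral_eq_Suc lessThan_Suc add_ac)
lemma sumA0: fixes f :: "nat \<Rightarrow> 'a::comm_monoid_add" shows "(\<Sum>k\<le>0. f k) = f 0" by simp
lemma sumA1: fixes f :: "nat \<Rightarrow> 'a::comm_monoid_add" shows "(\<Sum>k\<le>1. f k) = f 0 + f 1"
  by (simp add: numeral_eq_Suc atMost_Suc add_ac)
lemma sumA2: fixes f :: "nat \<Rightarrow> 'a::comm_monoid_add" shows "(\<Sum>k\<le>2. f k) = f 0 + f 1 + f 2"
  by (simp add: numeral_eq_Suc atMost_Suc add_ac)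
lemma sumA3: fixes f :: "nat \<Rightarrow> 'a::comm_monoid_add" shows "(\<Sum>k\<le>3. f k) = f 0 + f 1 + f 2 + f 3"
  by (simp add: numeral_eq_Suc atMost_Suc add_ac)
lemma sumA4: fixes f :: "nat \<Rightarrow> 'a::comm_monoid_add" shows "(\<Sum>k\<le>4. f k) = f 0 + f 1 + f 2 + f 3 + f 4"
  by (simp add: numeral_eq_Suc atMost_Suc add_ac)

lemma mult6: assumes "i < 6" "j < 6"
  shows "(mat 6 6 f * mat 6 6 g) $$ (i,j) = (\<Sum>k<6. f (i,k) * g (k,j))"
  using assms by (simp add: scalar_prod_def lessThan_atLeast0)

lemma upt6: "[0..<6] = [0,1,2,3,4,5::nat]" by (simp add: upt_rec)

lemma less6: "(i::nat) < 6 \<Longrightarrow> i = 0 \<or> i = 1 \<or> i = 2 \<or> i = 3 \<or> i = 4 \<or> i = 5" by auto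

context hasse
begin

lemma D_one: "D k 1 = (if k = 0 then 1 else 0)"
  using F1 by (auto simp: Dconst)

lemma Dl_power_lt: "k < l \<Longrightarrow> fps_nth (Dl z ^ l) k = 0"
  using Dl_power_nth[of z l k] by simp
lemma Dl_power_eq: "fps_nth (Dl z ^ l) l = D 1 z ^ l"
  using Dl_power_nth[of z l l] by simp

lemma Dsum_flat:
  assumes "s \<le> 4" "\<forall>l<5. flat (c l)"
  shows "D s (\<Sum>l<5. c l * f l) = (\<Sum>l<5. c l * D s (f l))"
  unfolding Dsum using assms by (intro sum.cong refl) (simp add: flat_multD)

lemma key_det:
  fixes phi :: "nat \<Rightarrow> 'k" and H y :: 'k and A :: "nat \<Rightarrow> nat \<Rightarrow> 'k" and q :: nat
  assumes flatA: "\<forall>l<5. \<forall>j<6. flat (A l j)"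
  and rep: "\<forall>j<6. H * phi j = (\<Sum>l<5. A l j * y ^ l)"
  shows "H ^ 5 * det (mat 6 6 (\<lambda>(i,j). if i = 0 then phi j ^ q else D ([0,1,2,3,4] ! (i-1)) (phi j)))
        = D 1 y ^ 10 * det (mat 6 6 (\<lambda>(i,j). if i = 0 then phi j ^ q else A (i-1) j))"
proof -
  define Lm where "Lm = mat 6 6 (\<lambda>(i,k). if i = 0 \<or> k = 0 then (if i = k then 1 else 0) else if k \<le> i then D (i-k) H else 0)"
  define Mm where "Mm = mat 6 6 (\<lambda>(i,j). if i = 0 then phi j ^ q else D ([0,1,2,3,4] ! (i-1)) (phi j))"
  define Wm where "Wm = mat 6 6 (\<lambda>(i,k). if i = 0 \<or> k = 0 then (if i = k then 1 else 0) else D (i-1) (y ^ (k-1)))"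
  define Nm where "Nm = mat 6 6 (\<lambda>(i,j). if i = 0 then phi j ^ q else A (i-1) j)"
  define Bm where "Bm = mat 6 6 (\<lambda>(i,k). if i = 0 \<or> k = 0 then (if i = k then 1 else 0) else fps_nth (Dl y ^ (k-1)) (i-1))"
  define Um where "Um = mat 6 6 (\<lambda>(k,j). if k = 0 \<or> j = 0 then (if k = j then 1 else 0) else of_nat ((j-1) choose (k-1)) * y ^ ((j-1)-(k-1)))"
  have WN: "(Wm * Nm) $$ (i, j) = D (i - 1) (H * phi j)" if "i < 6" "j < 6" "i \<ge> 1" for i j
  proof -
    have "(Wm * Nm) $$ (i, j) = (\<Sum>l<5. A l j * D (i-1) (y ^ l))"
      using that unfolding Wm_def Nm_def by (simp add: mult6 sum6 sum5 mult.commute del: index_mult_mat)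
    also have "\<dots> = D (i - 1) (\<Sum>l<5. A l j * y ^ l)"
      using that flatA by (intro Dsum_flat[symmetric]) auto
    finally show ?thesis using rep that by simp
  qed
  have LM: "(Lm * Mm) $$ (i, j) = D (i - 1) (H * phi j)" if "i < 6" "j < 6" "i \<ge> 1" for i j
    using that less6[OF that(1)] unfolding Lm_def Mm_def
    by (auto simp del: index_mult_mat simp: mult6 sum6 Dmult sumA1 sumA2 sumA3 sumA4 algebra_simps)
  have e1: "Lm * Mm = Wm * Nm"
  proof (rule eq_matI)
    fix i j assume ij: "i < dim_row (Wm * Nm)" "j < dim_col (Wm * Nm)"
    then have i: "i < 6" and j: "j < 6" unfolding Wm_def Nm_def by auto
    show "(Lm * Mm) $$ (i, j) = (Wm * Nm) $$ (i, j)"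
    proof (cases "i = 0")
      case True
      then show ?thesis using j unfolding Lm_def Mm_def Wm_def Nm_def by (simp add: mult6 sum6 del: index_mult_mat)
    next
      case False
      then show ?thesis using LM WN i j by simp
    qed
  qed (auto simp: Lm_def Mm_def Wm_def Nm_def)
  have e2: "Wm = Bm * Um"
  proof (rule eq_matI)
    fix i j assume ij: "i < dim_row (Bm * Um)" "j < dim_col (Bm * Um)"
    then have i: "i < 6" and j: "j < 6" unfolding Bm_def Um_def by auto
    show "Wm $$ (i, j) = (Bm * Um) $$ (i, j)"
      using less6[OF j] less6[OF i] unfolding Wm_def Bm_def Um_def
      by (auto simp del: index_mult_mat simp: mult6 sum6 D_power_expand sumA1 sumA2 sumA3 sumA4
          binomial_eq_0 D_one Dl_0 Dl_nth Dl_power_lt)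
  qed (auto simp: Wm_def Bm_def Um_def)
  have dL: "det Lm = H ^ 5"
  proof -
    have "det Lm = prod_list (diag_mat Lm)"
      by (rule det_lower_triangular[of 6]) (auto simp: Lm_def)
    also have "\<dots> = H ^ 5" by (simp add: diag_mat_def Lm_def upt6 power2_eq_square eval_nat_numeral)
    finally show ?thesis .
  qed
  have dB: "det Bm = D 1 y ^ 10"
  proof -
    have "det Bm = prod_list (diag_mat Bm)"
      by (rule det_lower_triangular[of 6]) (auto simp: Bm_def Dl_power_nth)
    also have "\<dots> = D 1 y * D 1 y ^ 2 * D 1 y ^ 3 * D 1 y ^ 4"
      using Dl_power_eq[of y 1] Dl_power_eq[of y 2] Dl_power_eq[of y 3] Dl_power_eq[of y 4]
      by (simp add: diag_mat_def Bm_def upt6)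
    also have "\<dots> = D 1 y ^ 10" by (simp add: eval_nat_numeral mult_ac)
    finally show ?thesis .
  qed
  have dU: "det Um = 1"
  proof -
    have "det Um = prod_list (diag_mat Um)"
      by (rule det_upper_triangular[of _ 6]) (auto simp: Um_def upper_triangular_def binomial_eq_0)
    also have "\<dots> = 1" by (simp add: diag_mat_def Um_def upt6)
    finally show ?thesis .
  qed
  have "det Lm * det Mm = det Wm * det Nm"
    using e1 det_mult[of Lm 6 Mm] det_mult[of Wm 6 Nm] by (simp add: Lm_def Mm_def Wm_def Nm_def)
  also have "det Wm = D 1 y ^ 10"
    using e2 det_mult[of Bm 6 Um] dB dU by (simp add: Bm_def Um_def)
  finally show ?thesis using dL unfolding Mm_def Nm_def by simp
qed

end

lemma sorted_ge:
  assumes "sorted_wrt (<) (u :: nat list)"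
  shows "i < length u \<Longrightarrow> i \<le> u ! i"
proof (induction i)
  case 0 then show ?case by simp
next
  case (Suc i)
  have "u ! i < u ! Suc i" using assms Suc.prems by (simp add: sorted_wrt_nth_less)
  then show ?case using Suc by simp
qed

theorem proposition4p11:
  fixes p h q m n :: nat and a b c x y :: "'k::field"
  assumes "prime p" and "p > 5" and "h \<ge> 1" and "q = p ^ h"
    and "of_nat p = (0::'k)"
    and "card (Fq_set q :: 'k set) = q"
    and "a \<in> Fq_set q" and "b \<in> Fq_set q" and "c \<in> Fq_set q"
    and "a \<noteq> 0" and "b \<noteq> 0" and "c \<noteq> 0" and "c \<noteq> - (a / b)"
    and "m > 0" and "n > 0" and "\<not> p dvd (m * n)" and "n \<ge> m" and "min m n > 2"
    and "p dvd (n + 1)" and "p dvd (m - 1)"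
    and "a * x ^ n * y ^ m + b * x ^ n + c * y ^ m = 1"
    and "transcendental_over (Fq_set q) x"
    and "generated_by (Fq_set q) x y"
  shows "\<forall>tau D. is_hasse_deriv (Fq_set q) tau D \<longrightarrow> frobenius_classical_conics q D x y"
proof (intro allI impI)
  fix tau :: 'k and D :: "nat \<Rightarrow> 'k \<Rightarrow> 'k" assume hdD: "is_hasse_deriv (Fq_set q) tau D"
  note prm = assms(1) and p5 = assms(2) and qdef = assms(4) and charp = assms(5)
  note aF = assms(7) and bF = assms(8) and cF = assms(9)
  note a0 = assms(10) and b0 = assms(11) and c0 = assms(12) and cab = assms(13)
  note m0 = assms(14) and n0 = assms(15) and nm = assms(17) and mn2 = assms(18)
  note pn = assms(19) and pm = assms(20) and eq = assms(21) and tr = assms(22) and gen = assms(23)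
  let ?F = "Fq_set q :: 'k set"
  have p0: "p > 0" using p5 by simp
  have q0: "q > 0" using qdef p0 by simp
  have q1: "q \<ge> 2"
  proof -
    have "p \<le> p ^ h" using assms(3) p0 by (simp add: self_le_power)
    then show ?thesis using qdef p5 by simp
  qed
  have frob: "\<And>u v :: 'k. (u + v) ^ q = u ^ q + v ^ q"
    using frob_add_pow[OF prm charp] qdef by simp
  have F0: "0 \<in> ?F" using q0 by (simp add: Fq_set_def)
  have F1: "1 \<in> ?F" by (simp add: Fq_set_def)
  have Fadd: "\<And>u v. u \<in> ?F \<Longrightarrow> v \<in> ?F \<Longrightarrow> u + v \<in> ?F" by (simp add: Fq_set_def frob)
  have Fmult: "\<And>u v. u \<in> ?F \<Longrightarrow> v \<in> ?F \<Longrightarrow> u * v \<in> ?F" by (simp add: Fq_set_def power_mult_distrib)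
  have Fneg: "\<And>u. u \<in> ?F \<Longrightarrow> - u \<in> ?F"
  proof -
    fix u :: 'k assume u: "u \<in> ?F"
    have "(u + - u) ^ q = u ^ q + (- u) ^ q" by (rule frob)
    then have "0 = u + (- u) ^ q" using u q0 by (simp add: Fq_set_def zero_power)
    then show "- u \<in> ?F" by (simp add: Fq_set_def eq_neg_iff_add_eq_0 add.commute)
  qed
  interpret H: hasse ?F tau D using hdD F1 by unfold_locales auto
  interpret S: subr ?F using F0 F1 Fadd Fmult Fneg by unfold_locales auto
  have trans: "\<And>P. S.cp P \<Longrightarrow> poly P x = 0 \<Longrightarrow> P = 0"
    using tr unfolding transcendental_over_def S.cp_def by blast
  have x0: "x \<noteq> 0"
  proof
    assume "x = 0"
    then have "poly (monom 1 1) x = 0" by (simp add: poly_monom)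
    moreover have "S.cp (monom 1 1)" using F1 by blast
    ultimately have "monom (1::'k) 1 = 0" using trans by blast
    then show False by simp
  qed
  have y0: "y \<noteq> 0"
  proof
    assume "y = 0"
    then have "b * x ^ n = 1" using eq m0 by (simp add: zero_power)
    then have "poly (monom b n - 1) x = 0" by (simp add: poly_monom)
    moreover have "S.cp (monom b n - 1)" using bF by blast
    ultimately have "monom b n - 1 = 0" using trans by blast
    then have "coeff (monom b n - 1) n = 0" by simp
    then show False using b0 n0 by (simp add: coeff_monom)
  qed
  have abc: "a + b * c \<noteq> 0"
  proof
    assume "a + b * c = 0"
    then have "c = - (a / b)" using b0 by (simp add: field_simps) (metis add.commute add_eq_0_iff mult.commute)
    then show False using cab by simp
  qed
  define C where "C = x ^ (n + 1)"
  define E where "E = y ^ (m - 1)"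
  define X where "X = x ^ q"
  define Y where "Y = y ^ q"
  have Ey: "E * y = y ^ m" unfolding E_def using m0 by (metis Suc_diff_1 power_Suc2)
  have Cx: "C = x * x ^ n" unfolding C_def by simp
  have eqw: "y ^ m * (a * x ^ n + c) = 1 - b * x ^ n" using eq by (simp add: algebra_simps)
  have h0: "1 - c * E * y \<noteq> 0"
  proof
    assume "1 - c * E * y = 0"
    then have cw: "c * y ^ m = 1" using Ey by (simp add: mult.assoc)
    have "(c * y ^ m) * (a * x ^ n + c) = c * (1 - b * x ^ n)" using eqw by (simp add: mult.assoc)
    then have "(a + b * c) * x ^ n = 0" using cw by (simp add: algebra_simps)
    then show False using abc x0 by simp
  qed
  have xh: "x * (1 - c * E * y) = b * C + a * C * E * y"
  proof -
    have "x * (1 - c * E * y) - (b * C + a * C * E * y) = x * (1 - (a * x ^ n * y ^ m + b * x ^ n + c * y ^ m))"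
      by (simp only: Ey[symmetric] Cx) (simp add: algebra_simps)
    also have "\<dots> = 0" using eq by simp
    finally show ?thesis by simp
  qed
  have flatC: "H.flat C"
  proof -
    obtain t where t: "n + 1 = p * t" using pn by blast
    have "C = (x ^ p) ^ t" unfolding C_def t by (simp add: power_mult)
    then show ?thesis using H.flat_ppower[OF prm charp] p5 by auto
  qed
  have flatE: "H.flat E"
  proof -
    obtain t where t: "m - 1 = p * t" using pm by blast
    have "E = (y ^ p) ^ t" unfolding E_def t by (simp add: power_mult)
    then show ?thesis using H.flat_ppower[OF prm charp] p5 by auto
  qed
  have fa: "H.flat a" "H.flat b" "H.flat c" using aF bF cF by auto
  have D1y: "D 1 y \<noteq> 0"
  proof
    assume y1: "D 1 y = 0"
    have fcE: "H.flat (c * E)" "H.flat (a * C * E)" "H.flat (b * C)" using fa flatC flatE by auto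
    have "D 1 (1 - c * E * y) = 0"
      using H.flat_multD[OF fcE(1), of 1 y] y1 by (simp add: H.Ddiff H.D_one)
    moreover have "D 1 (b * C + a * C * E * y) = 0"
      using H.flat_multD[OF fcE(2), of 1 y] H.flat_D[OF fcE(3), of 1] y1 by (simp add: H.Dadd)
    ultimately have "D 1 x * (1 - c * E * y) = 0" using xh H.D1mult[of x "1 - c * E * y"] by simp
    then have x1: "D 1 x = 0" using h0 by simp
    obtain NN :: nat and P Q :: "nat \<Rightarrow> 'k poly" where
      PQ: "\<forall>i j. coeff (P i) j \<in> ?F \<and> coeff (Q i) j \<in> ?F"
      and den: "(\<Sum>i\<le>NN. poly (Q i) x * y ^ i) \<noteq> 0"
      and tau: "tau = (\<Sum>i\<le>NN. poly (P i) x * y ^ i) / (\<Sum>i\<le>NN. poly (Q i) x * y ^ i)"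
      using gen unfolding generated_by_def by blast
    have Dz: "D 1 (\<Sum>i\<le>NN. poly (R i) x * y ^ i) = 0" if "\<forall>i j. coeff (R i) j \<in> ?F" for R
    proof -
      have "D 1 (\<Sum>i\<le>NN. poly (R i) x * y ^ i) = (\<Sum>i\<le>NN. D 1 (poly (R i) x * y ^ i))" by (rule H.Dsum)
      also have "\<dots> = 0"
      proof (intro sum.neutral ballI)
        fix i
        have "D 1 (poly (R i) x) = 0" using H.D1_poly[OF x1] that by blast
        moreover have "D 1 (y ^ i) = 0" using H.D1_power[OF y1] .
        ultimately show "D 1 (poly (R i) x * y ^ i) = 0" by (simp add: H.D1mult)
      qed
      finally show ?thesis .
    qed
    have "D 1 tau = 0" unfolding tau
      by (rule H.D1_div[OF den]) (use Dz PQ in auto)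
    then show False using H.Dtau by simp
  qed
  \<comment> \<open>the Frobenius image does not lie on the osculating conic\<close>
  have g0: "b * C - X + a * C * E * Y + c * E * X * Y \<noteq> 0"
  proof
    assume g: "b * C - X + a * C * E * Y + c * E * X * Y = 0"
    define w where "w = y ^ m"
    define z where "z = y ^ (q - 1)"
    define Q where "Q = q - 1"
    have Q0: "0 < Q" using q1 unfolding Q_def by simp
    have Yz: "Y = y * z" unfolding Y_def z_def using q0 by (metis Suc_diff_1 power_Suc)
    have Xx: "X = x * x ^ Q" unfolding X_def Q_def using q0 by (metis Suc_diff_1 power_Suc)
    have Ew: "E * y = w" using Ey unfolding w_def .
    have "x * (b * x ^ n - x ^ Q + w * z * (a * x ^ n + c * x ^ Q)) = b * C - X + a * C * E * Y + c * E * X * Y"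
      by (simp only: Ew[symmetric] Cx Yz Xx) (simp add: algebra_simps)
    then have "x * (b * x ^ n - x ^ Q + w * z * (a * x ^ n + c * x ^ Q)) = 0" using g by simp
    then have K0: "b * x ^ n - x ^ Q + w * z * (a * x ^ n + c * x ^ Q) = 0" using x0 by simp
    have k1: "w * z * (a * x ^ n + c * x ^ Q) = x ^ Q - b * x ^ n"
      using K0 by (simp add: algebra_simps)
    have zm: "z ^ m = w ^ Q" unfolding z_def w_def Q_def by (simp add: power_mult[symmetric] mult.commute)
    have "w ^ m * w ^ Q * (a * x ^ n + c * x ^ Q) ^ m = (x ^ Q - b * x ^ n) ^ m"
      using k1 zm by (metis power_mult_distrib)
    then have k2: "w ^ (Q + m) * (a * x ^ n + c * x ^ Q) ^ m = (x ^ Q - b * x ^ n) ^ m"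
      by (simp add: power_add mult_ac)
    have eqw': "w * (a * x ^ n + c) = 1 - b * x ^ n" using eqw unfolding w_def .
    have "(1 - b * x ^ n) ^ (Q + m) * (c * x ^ Q + a * x ^ n) ^ m
        = (w ^ (Q + m) * (a * x ^ n + c * x ^ Q) ^ m) * (a * x ^ n + c) ^ (Q + m)"
      unfolding eqw'[symmetric] by (simp add: power_mult_distrib mult_ac add.commute)
    also have "\<dots> = (x ^ Q - b * x ^ n) ^ m * (a * x ^ n + c) ^ (Q + m)" using k2 by simp
    finally have k3: "(1 - b * x ^ n) ^ (Q + m) * (c * x ^ Q + a * x ^ n) ^ m
        = (x ^ Q - b * x ^ n) ^ m * (a * x ^ n + c) ^ (Q + m)" .
    define PP where "PP = ([:1:] - monom b n) ^ (Q + m) * (monom c Q + monom a n) ^ m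
         - (monom 1 Q - monom b n) ^ m * (monom a n + [:c:]) ^ (Q + m)"
    have "poly PP x = 0" unfolding PP_def using k3 by (simp add: poly_monom)
    moreover have "S.cp PP" unfolding PP_def using aF bF cF F1 by (intro S.cp_diff S.cp_mult S.cp_power S.cp_add S.cp_monom S.cp_const) auto
    ultimately have "PP = 0" using trans by blast
    then have "([:1:] - monom b n) ^ (Q + m) * (monom c Q + monom a n) ^ m
         = (monom 1 Q - monom b n) ^ m * (monom a n + [:c:]) ^ (Q + m)" unfolding PP_def by simp
    then show False using poly_contra[OF b0 abc nm m0 Q0] by blast
  qed
  define phi where "phi = conic_monomials x y"
  define Alist where "Alist = [[1, b*C, 0, b^2*C^2, 0, 0],
     [-2*c*E, (a-b*c)*C*E, 1, 2*a*b*C^2*E, b*C, 0],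
     [c^2*E^2, -a*c*C*E^2, -2*c*E, a^2*C^2*E^2, (a-b*c)*C*E, 1],
     [0, 0, c^2*E^2, 0, -a*c*C*E^2, -2*c*E],
     [0,0,0,0,0,c^2*E^2]]"
  define A where "A = (\<lambda>l j. Alist ! l ! j)"
  have flatA: "\<forall>l<5. \<forall>j<6. H.flat (A l j)"
  proof (intro allI impI)
    fix l j :: nat assume l: "l < 5" and j: "j < 6"
    have "l = 0 \<or> l = 1 \<or> l = 2 \<or> l = 3 \<or> l = 4" using l by auto
    then show "H.flat (A l j)" using less6[OF j] fa flatC flatE unfolding A_def Alist_def
      by (elim disjE) (auto intro!: H.flat_mult H.flat_add H.flat_diff H.flat_uminus H.flat_power H.flat_numeral)
  qed
  have hx1: "(1 - c * E * y) ^ 2 * x = (1 - c * E * y) * (b * C + a * C * E * y)"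
  proof -
    have "(1 - c * E * y) ^ 2 * x = (1 - c * E * y) * (x * (1 - c * E * y))" by (simp add: power2_eq_square mult_ac)
    then show ?thesis using xh by simp
  qed
  have hx2: "(1 - c * E * y) ^ 2 * x ^ 2 = (b * C + a * C * E * y) ^ 2"
    using xh by (metis power_mult_distrib mult.commute)
  have hx3: "(1 - c * E * y) ^ 2 * (x * y) = (1 - c * E * y) * (b * C + a * C * E * y) * y"
    using hx1 by (metis mult.assoc)
  have ph: "phi 0 = 1" "phi 1 = x" "phi 2 = y" "phi 3 = x ^ 2" "phi 4 = x * y" "phi 5 = y ^ 2"
    by (simp_all add: phi_def conic_monomials_def)
  have rep: "\<forall>j<6. (1 - c * E * y) ^ 2 * phi j = (\<Sum>l<5. A l j * y ^ l)"
  proof (intro allI impI)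
    fix j :: nat assume j: "j < 6"
    show "(1 - c * E * y) ^ 2 * phi j = (\<Sum>l<5. A l j * y ^ l)"
      using less6[OF j]
    proof (elim disjE)
      assume j1: "j = 0" then show ?thesis unfolding j1 sum5 A_def Alist_def ph by (simp add: eval_nat_numeral algebra_simps)
    next
      assume j1: "j = 1"
      have "(1 - c * E * y) ^ 2 * phi j = (1 - c * E * y) * (b * C + a * C * E * y)" using hx1 j1 ph by simp
      then show ?thesis unfolding sum5 A_def Alist_def j1 by (simp add: eval_nat_numeral algebra_simps)
    next
      assume j1: "j = 2" then show ?thesis unfolding j1 sum5 A_def Alist_def ph by (simp add: eval_nat_numeral algebra_simps)
    next
      assume j1: "j = 3"
      have "(1 - c * E * y) ^ 2 * phi j = (b * C + a * C * E * y) ^ 2" using hx2 j1 ph by simp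
      then show ?thesis unfolding sum5 A_def Alist_def j1 by (simp add: eval_nat_numeral algebra_simps)
    next
      assume j1: "j = 4"
      have "(1 - c * E * y) ^ 2 * phi j = (1 - c * E * y) * (b * C + a * C * E * y) * y" using hx3 j1 ph by simp
      then show ?thesis unfolding sum5 A_def Alist_def j1 by (simp add: eval_nat_numeral algebra_simps)
    next
      assume j1: "j = 5" then show ?thesis unfolding j1 sum5 A_def Alist_def ph by (simp add: eval_nat_numeral algebra_simps)
    qed
  qed
  have kd: "((1 - c * E * y) ^ 2) ^ 5 * frob_det q D phi [0, 1, 2, 3, 4]
      = D 1 y ^ 10 * det (mat 6 6 (\<lambda>(i,j). if i = 0 then phi j ^ q else A (i-1) j))"
    unfolding frob_det_def using H.key_det[OF flatA rep] by simp
  define Nl where "Nl = [1, X, Y, X^2, X*Y, Y^2] # Alist"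
  have lenNl: "length Nl = 6" unfolding Nl_def Alist_def by simp
  have matEq: "mat 6 6 (\<lambda>(i,j). if i = 0 then phi j ^ q else A (i-1) j)
      = mat 6 6 (\<lambda>(i,j). Nl ! i ! j)"
  proof (rule eq_matI)
    fix i j assume "i < dim_row (mat 6 6 (\<lambda>(i,j). Nl ! i ! j))"
      "j < dim_col (mat 6 6 (\<lambda>(i,j). Nl ! i ! j))"
    then have i: "i < 6" and j: "j < 6" by auto
    have pw: "\<And>z::'k. (z ^ 2) ^ q = (z ^ q) ^ 2" by (simp add: power_mult[symmetric] mult.commute)
    have row0: "phi j ^ q = [1, X, Y, X^2, X*Y, Y^2] ! j"
      using less6[OF j] unfolding X_def Y_def phi_def conic_monomials_def
      by (auto simp: power_mult_distrib pw)
    show "mat 6 6 (\<lambda>(i,j). if i = 0 then phi j ^ q else A (i-1) j) $$ (i, j) =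
          mat 6 6 (\<lambda>(i,j). Nl ! i ! j) $$ (i, j)"
      using i j row0 unfolding A_def Nl_def by (cases i) auto
  qed auto
  have "det (mat 6 6 (\<lambda>(i,j). if i = 0 then phi j ^ q else A (i-1) j))
      = dl Nl" unfolding matEq dl_def lenNl ..
  also have "\<dots> = - (b*C - X + a*C*E*Y + c*E*X*Y) * c^3 * (a + b*c)^3 * C^3 * E^6"
    unfolding Nl_def Alist_def by (rule detN)
  finally have dN: "det (mat 6 6 (\<lambda>(i,j). if i = 0 then phi j ^ q else A (i-1) j))
      = - (b*C - X + a*C*E*Y + c*E*X*Y) * c^3 * (a + b*c)^3 * C^3 * E^6" .
  have C0: "C \<noteq> 0" using x0 unfolding C_def by simp
  have E0: "E \<noteq> 0" using y0 unfolding E_def by simp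
  have "D 1 y ^ 10 * det (mat 6 6 (\<lambda>(i,j). if i = 0 then phi j ^ q else A (i-1) j)) \<noteq> 0"
  proof -
    obtain G where G: "G = b*C - X + a*C*E*Y + c*E*X*Y" by blast
    have G0: "G \<noteq> 0" using g0 G by simp
    show ?thesis unfolding dN G[symmetric] using D1y G0 c0 abc C0 E0 by simp
  qed
  then have fd: "frob_det q D phi [0, 1, 2, 3, 4] \<noteq> 0" using kd by auto
  show "frobenius_classical_conics q D x y"
    unfolding frobenius_classical_conics_def is_frob_order_seq_def phi_def[symmetric]
  proof (intro conjI allI impI)
    show "admissible_seq [0, 1, 2, 3, 4]" by (simp add: admissible_seq_def)
    show "frob_det q D phi [0, 1, 2, 3, 4] \<noteq> 0" by (rule fd)
    fix nu' assume "admissible_seq nu' \<and> lex_less nu' [0, 1, 2, 3, 4]"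
    then have s: "sorted_wrt (<) nu'" and ll: "lex_less nu' [0, 1, 2, 3, 4]"
      by (auto simp: admissible_seq_def)
    from ll obtain k where k0: "k < length [0, 1, 2, 3, 4::nat]" "k < length nu'" "nu' ! k < [0, 1, 2, 3, 4] ! k"
      unfolding lex_less_def by blast
    then have k: "k < 5" "k < length nu'" "nu' ! k < [0, 1, 2, 3, 4] ! k" by auto
    have "[0, 1, 2, 3, 4::nat] ! k = k" using k(1) by (auto simp: less_Suc_eq numeral_eq_Suc nth_Cons split: nat.split)
    moreover have "k \<le> nu' ! k" using sorted_ge[OF s k(2)] .
    ultimately show "frob_det q D phi nu' = 0" using k(3) by simp
  qed
qed

end
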